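(* Let $k$ be an algebraically closed field of characteristic $p\ge0$, let $1\le s\le t$ be integers, let $R=k[x,y]/(x^s,y^t)$ with its standard grading $R=\bigoplus_{i=0}^{s+t-2}R_i$, and let $\theta$ be the image of $x+y$ in $R$. Then there exist nonzero homogeneous elements $\omega_0,\omega_1,\dots,\omega_{s-1}$ of $R$ with $\omega_i\in R_i$ for each $i$, such that $$R=\bigoplus_{i=0}^{s-1}k[\theta]\,\omega_i$$ as $k[\theta]$-modules (an internal direct sum of the cyclic submodules $k[\theta]\omega_i$, which give an indecomposable decomposition of $R$ as a $k[\theta]$-module).
   Context: $R_i$ is the $k$-span of the images of the monomials $x^ay^b$ with $a+b=i$, $a<s$, $b<t$. $k[\theta]$ is the $k$-subalgebra of $R$ generated by $\theta$, and $R$ is regarded as a $k[\theta]$-module by multiplication. *)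

theory Defs
  imports "HOL-Computational_Algebra.Polynomial"
begin

definition alg_closed :: "'a::field itself \<Rightarrow> bool" where
  "alg_closed _ \<longleftrightarrow> (\<forall>q::'a poly. degree q \<ge> 1 \<longrightarrow> (\<exists>z. poly q z = 0))"

text \<open>The ring R = k[x,y]/(x^s,y^t), represented by coefficient arrays:
  an element is a function f with f a b the coefficient of x^a y^b,
  supported on a < s, b < t (the monomial basis of R).\<close>
definition Rcar :: "nat \<Rightarrow> nat \<Rightarrow> (nat \<Rightarrow> nat \<Rightarrow> 'a::field) set" where
  "Rcar s t = {f. \<forall>a b. (s \<le> a \<or> t \<le> b) \<longrightarrow> f a b = 0}"

definition Rzero :: "nat \<Rightarrow> nat \<Rightarrow> 'a::field" where
  "Rzero = (\<lambda>a b. 0)"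

definition Rone :: "nat \<Rightarrow> nat \<Rightarrow> nat \<Rightarrow> nat \<Rightarrow> 'a::field" where
  "Rone s t = (\<lambda>a b. if a = 0 \<and> b = 0 \<and> 0 < s \<and> 0 < t then 1 else 0)"

definition Rmul :: "nat \<Rightarrow> nat \<Rightarrow> (nat \<Rightarrow> nat \<Rightarrow> 'a::field) \<Rightarrow> (nat \<Rightarrow> nat \<Rightarrow> 'a) \<Rightarrow> nat \<Rightarrow> nat \<Rightarrow> 'a" where
  "Rmul s t f g = (\<lambda>a b. if a < s \<and> b < t
      then (\<Sum>i\<le>a. \<Sum>j\<le>b. f i j * g (a - i) (b - j)) else 0)"

definition Rtheta :: "nat \<Rightarrow> nat \<Rightarrow> nat \<Rightarrow> nat \<Rightarrow> 'a::field" where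
  "Rtheta s t = (\<lambda>a b. if a < s \<and> b < t \<and> ((a = 1 \<and> b = 0) \<or> (a = 0 \<and> b = 1)) then 1 else 0)"

fun Rtheta_pow :: "nat \<Rightarrow> nat \<Rightarrow> nat \<Rightarrow> nat \<Rightarrow> nat \<Rightarrow> 'a::field" where
  "Rtheta_pow s t 0 = Rone s t"
| "Rtheta_pow s t (Suc n) = Rmul s t (Rtheta s t) (Rtheta_pow s t n)"

definition Rhomog :: "nat \<Rightarrow> (nat \<Rightarrow> nat \<Rightarrow> 'a::field) \<Rightarrow> bool" where
  "Rhomog i f \<longleftrightarrow> (\<forall>a b. f a b \<noteq> 0 \<longrightarrow> a + b = i)"

definition Rcyclic :: "nat \<Rightarrow> nat \<Rightarrow> (nat \<Rightarrow> nat \<Rightarrow> 'a::field) \<Rightarrow> (nat \<Rightarrow> nat \<Rightarrow> 'a) set" where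
  "Rcyclic s t w = {Rmul s t (\<lambda>a b. \<Sum>j\<le>degree q. coeff q j * Rtheta_pow s t j a b) w | q. True}"

end

theory Submission
  imports Defs "HOL-Library.Function_Algebras"
begin

type_synonym 'a vec = "nat \<Rightarrow> nat \<Rightarrow> 'a"

lemma fun_sum_apply: "sum F A a b = (\<Sum>i\<in>A. F i a b)"
proof -
  have "sum ((\<lambda>f. f a b) \<circ> F) A = (\<lambda>f. f a b) (sum F A)"
    by (rule sum_comp_morphism) auto
  then show ?thesis by (simp add: o_def)
qed

definition Tx :: "nat \<Rightarrow> nat \<Rightarrow> 'a::field vec \<Rightarrow> 'a vec" where
  "Tx s t f = (\<lambda>a b. (if a < s \<and> b < t \<and> 0 < a then f (a - 1) b else 0)
      + (if a < s \<and> b < t \<and> 0 < b then f a (b - 1) else 0))"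

lemma Rmul_theta: "Rmul s t (Rtheta s t) f = Tx s t f"
proof (intro ext)
  fix a b
  show "Rmul s t (Rtheta s t) f a b = Tx s t f a b"
  proof (cases "a < s \<and> b < t")
    case False then show ?thesis by (auto simp: Rmul_def Tx_def)
  next
    case True
    have "(\<Sum>i\<le>a. \<Sum>j\<le>b. Rtheta s t i j * f (a - i) (b - j)) =
       (\<Sum>i\<le>a. \<Sum>j\<le>b. (if i = 1 then (if j = 0 then f (a - 1) b else 0) else 0)
          + (if i = 0 then (if j = 1 then f a (b - 1) else 0) else 0))"
      using True by (intro sum.cong refl) (auto simp: Rtheta_def)
    also have "\<dots> = (if 0 < a then f (a - 1) b else 0) + (if 0 < b then f a (b - 1) else 0)"
    proof -
      have 1: "(\<Sum>i\<le>a. \<Sum>j\<le>b. (if i = 1 then (if j = 0 then f (a - 1) b else 0) else 0))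
          = (if 0 < a then f (a - 1) b else 0)"
      proof -
        have e: "\<And>i. (\<Sum>j\<le>b. (if i = 1 then (if j = 0 then f (a - 1) b else 0) else 0))
           = (if i = 1 then f (a - 1) b else 0)" by (simp add: sum.delta)
        show ?thesis by (simp only: e) (simp add: sum.delta Suc_le_eq)
      qed
      have 2: "(\<Sum>i\<le>a. \<Sum>j\<le>b. (if i = 0 then (if j = 1 then f a (b - 1) else 0) else 0))
          = (if 0 < b then f a (b - 1) else 0)"
      proof -
        have e: "\<And>i. (\<Sum>j\<le>b. (if i = 0 then (if j = 1 then f a (b - 1) else 0) else 0))
           = (if i = 0 then (if 0 < b then f a (b - 1) else 0) else 0)" by (simp add: sum.delta Suc_le_eq)
        show ?thesis by (simp only: e) (simp add: sum.delta)
      qed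
      show ?thesis by (simp only: sum.distrib 1 2)
    qed
    finally show ?thesis using True by (simp add: Rmul_def Tx_def)
  qed
qed


definition sc :: "'a::field \<Rightarrow> 'a vec \<Rightarrow> 'a vec" where
  "sc c f = (\<lambda>a b. c * f a b)"

definition cmp :: "nat \<Rightarrow> 'a::field vec \<Rightarrow> 'a vec" where
  "cmp d f = (\<lambda>a b. if a + b = d then f a b else 0)"

abbreviation Tp :: "nat \<Rightarrow> nat \<Rightarrow> nat \<Rightarrow> 'a::field vec \<Rightarrow> 'a vec" where
  "Tp s t j \<equiv> Tx s t ^^ j"

lemma Tx_add: "Tx s t (f + g) = Tx s t f + Tx s t g"
  by (auto simp: Tx_def fun_eq_iff)

lemma Tx_zero: "Tx s t 0 = 0"
  by (auto simp: Tx_def fun_eq_iff)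

lemma Tx_sc: "Tx s t (sc c f) = sc c (Tx s t f)"
  by (auto simp: Tx_def fun_eq_iff sc_def algebra_simps)

lemma Tx_diff: "Tx s t (f - g) = Tx s t f - Tx s t g"
  by (auto simp: Tx_def fun_eq_iff)

lemma Tp_add: "Tp s t j (f + g) = Tp s t j f + Tp s t j g"
  by (induction j) (simp_all only: funpow.simps id_apply comp_apply Tx_add)

lemma Tp_zero: "Tp s t j 0 = 0"
  by (induction j) (simp_all only: funpow.simps id_apply comp_apply Tx_zero)

lemma Tp_sc: "Tp s t j (sc c f) = sc c (Tp s t j f)"
  by (induction j) (simp_all add: Tx_sc)

lemma Tp_diff: "Tp s t j (f - g) = Tp s t j f - Tp s t j g"
  by (induction j) (simp_all only: funpow.simps id_apply comp_apply Tx_diff)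

lemma Tp_sum: "Tp s t j (sum F A) = (\<Sum>i\<in>A. Tp s t j (F i))"
proof -
  have "sum (Tp s t j \<circ> F) A = Tp s t j (sum F A)"
    by (rule sum_comp_morphism) (simp_all add: Tp_zero Tp_add)
  then show ?thesis by (simp add: o_def)
qed

lemma Tx_sum: "Tx s t (sum F A) = (\<Sum>i\<in>A. Tx s t (F i))"
  using Tp_sum[where s=s and t=t and j=1 and F=F and A=A] by simp

lemma Tp_Suc: "Tp s t (Suc j) f = Tx s t (Tp s t j f)"
  by simp

lemma Tp_Suc': "Tp s t (Suc j) f = Tp s t j (Tx s t f)"
  by (simp add: funpow_Suc_right del: funpow.simps)

lemma Tp_plus: "Tp s t (i + j) f = Tp s t i (Tp s t j f)"
  by (simp add: funpow_add)

lemma Tx_Rcar: "Tx s t f \<in> Rcar s t"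
  by (auto simp: Tx_def Rcar_def)

lemma Tp_Rcar: "w \<in> Rcar s t \<Longrightarrow> Tp s t j w \<in> Rcar s t"
  by (cases j) (simp_all add: Tx_Rcar del: funpow.simps add: Tp_Suc)

lemma Tp_low: "a + b < j \<Longrightarrow> Tp s t j f a b = 0"
proof (induction j arbitrary: a b)
  case 0 then show ?case by simp
next
  case (Suc j)
  show ?case using Suc.IH[of "a - 1" b] Suc.IH[of a "b - 1"] Suc.prems
    by (auto simp: Tx_def)
qed

lemma Tp_vanish: "0 < s \<Longrightarrow> s + t \<le> j \<Longrightarrow> Tp s t j f = 0"
proof (intro ext)
  fix a b assume s: "0 < s" and j: "s + t \<le> j"
  show "Tp s t j f a b = 0 a b"
  proof (cases "a < s \<and> b < t")
    case True then show ?thesis using Tp_low[of a b j] j by simp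
  next
    case False
    obtain j' where "j = Suc j'" using j s by (cases j) auto
    then have "Tp s t j f \<in> Rcar s t" using Tx_Rcar by simp
    then show ?thesis using False by (auto simp: Rcar_def)
  qed
qed

lemma Tx_homog: "Rhomog d f \<Longrightarrow> Rhomog (Suc d) (Tx s t f)"
  unfolding Rhomog_def
proof (intro allI impI)
  fix a b assume H: "\<forall>a b. f a b \<noteq> 0 \<longrightarrow> a + b = d" and ne: "Tx s t f a b \<noteq> 0"
  define A1 where "A1 = (if a < s \<and> b < t \<and> 0 < a then f (a - 1) b else 0)"
  define A2 where "A2 = (if a < s \<and> b < t \<and> 0 < b then f a (b - 1) else 0)"
  have "A1 + A2 \<noteq> 0" using ne by (simp add: Tx_def A1_def A2_def)
  then have "A1 \<noteq> 0 \<or> A2 \<noteq> 0" by auto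
  then show "a + b = Suc d"
  proof
    assume "A1 \<noteq> 0"
    then have "0 < a" "f (a - 1) b \<noteq> 0" unfolding A1_def by (auto split: if_splits)
    then show ?thesis using H by force
  next
    assume "A2 \<noteq> 0"
    then have "0 < b" "f a (b - 1) \<noteq> 0" unfolding A2_def by (auto split: if_splits)
    then show ?thesis using H by force
  qed
qed

lemma Tp_homog: "Rhomog d f \<Longrightarrow> Rhomog (d + j) (Tp s t j f)"
  by (induction j) (simp_all add: Tx_homog)

lemma Tx_cmp: "Tx s t (cmp d f) = cmp (Suc d) (Tx s t f)"
proof (intro ext)
  fix a b
  have 1: "0 < a \<Longrightarrow> (a - 1 + b = d) = (a + b = Suc d)" by arith
  have 2: "0 < b \<Longrightarrow> (a + (b - 1) = d) = (a + b = Suc d)" by arith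
  show "Tx s t (cmp d f) a b = cmp (Suc d) (Tx s t f) a b"
    unfolding Tx_def cmp_def using 1 2 by (simp only: if_distrib) auto
qed

lemma Tp_cmp: "Tp s t j (cmp d f) = cmp (d + j) (Tp s t j f)"
  by (induction j) (simp_all add: Tx_cmp)

lemma cmp_Rcar: "f \<in> Rcar s t \<Longrightarrow> cmp d f \<in> Rcar s t"
  by (auto simp: Rcar_def cmp_def)

lemma cmp_homog: "Rhomog d (cmp d f)"
  by (auto simp: Rhomog_def cmp_def)

lemma homog_cmp: "Rhomog d f \<Longrightarrow> cmp e f = (if e = d then f else 0)"
  by (auto simp: Rhomog_def cmp_def fun_eq_iff)

lemma Rcar_cmp_sum: "f \<in> Rcar s t \<Longrightarrow> f = (\<Sum>d<s+t. cmp d f)"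
proof (intro ext)
  fix a b assume f: "f \<in> Rcar s t"
  have "(\<Sum>d<s+t. cmp d f) a b = (\<Sum>d<s+t. if d = a + b then f a b else 0)"
    by (simp add: fun_sum_apply cmp_def eq_commute)
  also have "\<dots> = (if a + b < s + t then f a b else 0)" by (simp add: sum.delta)
  also have "\<dots> = f a b"
  proof (cases "a + b < s + t")
    case False then have "s \<le> a \<or> t \<le> b" by linarith
    then show ?thesis using f False unfolding Rcar_def by auto
  qed simp
  finally show "f a b = (\<Sum>d<s+t. cmp d f) a b" by simp
qed

lemma Rmul_lin1:
  "Rmul s t (\<lambda>a b. \<Sum>j\<in>J. c j * P j a b) w = (\<Sum>j\<in>J. sc (c j) (Rmul s t (P j) w))"
proof (intro ext)
  fix a b
  show "Rmul s t (\<lambda>a b. \<Sum>j\<in>J. c j * P j a b) w a b = (\<Sum>j\<in>J. sc (c j) (Rmul s t (P j) w)) a b"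
  proof (cases "a < s \<and> b < t")
    case False then show ?thesis by (simp add: Rmul_def fun_sum_apply sc_def if_not_P[OF False])
  next
    case True
    have "(\<Sum>i\<le>a. \<Sum>j\<le>b. (\<Sum>k\<in>J. c k * P k i j) * w (a - i) (b - j))
        = (\<Sum>i\<le>a. \<Sum>j\<le>b. \<Sum>k\<in>J. c k * (P k i j * w (a - i) (b - j)))"
      by (simp add: sum_distrib_right mult.assoc)
    also have "\<dots> = (\<Sum>k\<in>J. c k * (\<Sum>i\<le>a. \<Sum>j\<le>b. P k i j * w (a - i) (b - j)))"
      by (simp add: sum_distrib_left sum.swap[where A=J])
    finally show ?thesis using True by (simp add: Rmul_def fun_sum_apply sc_def)
  qed
qed

lemma Rmul_Tx: "Rmul s t (Tx s t p) w = Tx s t (Rmul s t p w)"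
proof (intro ext)
  fix a b
  show "Rmul s t (Tx s t p) w a b = Tx s t (Rmul s t p w) a b"
  proof (cases "a < s \<and> b < t")
    case False then show ?thesis by (auto simp: Rmul_def Tx_def)
  next
    case True
    have "Rmul s t (Tx s t p) w a b = (\<Sum>i\<le>a. \<Sum>j\<le>b. (if 0 < i then p (i - 1) j * w (a - i) (b - j) else 0))
        + (\<Sum>i\<le>a. \<Sum>j\<le>b. (if 0 < j then p i (j - 1) * w (a - i) (b - j) else 0))"
      using True unfolding Rmul_def Tx_def sum.distrib[symmetric]
      by (auto intro!: sum.cong simp: algebra_simps)
    also have "(\<Sum>i\<le>a. \<Sum>j\<le>b. (if 0 < i then p (i - 1) j * w (a - i) (b - j) else 0))
        = (if 0 < a then Rmul s t p w (a - 1) b else 0)"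
    proof (cases a)
      case 0 then show ?thesis by simp
    next
      case (Suc a') then show ?thesis using True
        by (simp only: Suc) (simp add: sum.atMost_Suc_shift Rmul_def del: sum.atMost_Suc)
    qed
    also have "(\<Sum>i\<le>a. \<Sum>j\<le>b. (if 0 < j then p i (j - 1) * w (a - i) (b - j) else 0))
        = (if 0 < b then Rmul s t p w a (b - 1) else 0)"
    proof (cases b)
      case 0 then show ?thesis by simp
    next
      case (Suc b') then show ?thesis using True
        by (simp only: Suc) (simp add: sum.atMost_Suc_shift Rmul_def del: sum.atMost_Suc)
    qed
    finally show ?thesis using True by (simp add: Tx_def)
  qed
qed

lemma Rmul_one: "w \<in> Rcar s t \<Longrightarrow> Rmul s t (Rone s t) w = w"
proof (intro ext)
  fix a b assume w: "w \<in> Rcar s t"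
  show "Rmul s t (Rone s t) w a b = w a b"
  proof (cases "a < s \<and> b < t")
    case False then show ?thesis using w by (auto simp: Rmul_def Rcar_def)
  next
    case True
    have "(\<Sum>i\<le>a. \<Sum>j\<le>b. Rone s t i j * w (a - i) (b - j))
       = (\<Sum>i\<le>a. \<Sum>j\<le>b. if i = 0 then (if j = 0 then w a b else 0) else 0)"
      using True by (intro sum.cong refl) (auto simp: Rone_def)
    also have "\<dots> = w a b"
    proof -
      have e: "\<And>i. (\<Sum>j\<le>b. if i = 0 then (if j = 0 then w a b else 0) else 0) = (if i = 0 then w a b else 0)"
        by (simp add: sum.delta)
      show ?thesis by (simp only: e) (simp add: sum.delta)
    qed
    finally show ?thesis using True by (simp add: Rmul_def)
  qed
qed

lemma Rmul_pow: "w \<in> Rcar s t \<Longrightarrow> Rmul s t (Rtheta_pow s t j) w = Tp s t j w"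
  by (induction j) (simp_all add: Rmul_one Rmul_theta Rmul_Tx)


definition lc :: "nat \<Rightarrow> nat \<Rightarrow> (nat \<Rightarrow> 'a::field) \<Rightarrow> 'a vec \<Rightarrow> 'a vec" where
  "lc s t c w = (\<Sum>j<s+t. sc (c j) (Tp s t j w))"

definition cyc :: "nat \<Rightarrow> nat \<Rightarrow> 'a::field vec \<Rightarrow> 'a vec set" where
  "cyc s t w = range (\<lambda>c. lc s t c w)"

lemma sc_0 [simp]: "sc 0 f = 0" by (simp add: sc_def fun_eq_iff)
lemma sc_zero [simp]: "sc c 0 = 0" by (simp add: sc_def fun_eq_iff)
lemma sc_1 [simp]: "sc 1 f = f" by (simp add: sc_def fun_eq_iff)

lemma lc_trunc:
  assumes s: "0 < s" and c: "\<forall>j\<ge>n. c j = 0"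
  shows "(\<Sum>j<n. sc (c j) (Tp s t j w)) = lc s t c w"
proof -
  have "(\<Sum>j<n. sc (c j) (Tp s t j w)) = (\<Sum>j<n+(s+t). sc (c j) (Tp s t j w))"
    using c by (intro sum.mono_neutral_left) auto
  moreover have Z: "\<forall>i\<in>{..<n+(s+t)} - {..<s+t}. sc (c i) (Tp s t i w) = 0"
  proof
    fix i assume "i \<in> {..<n+(s+t)} - {..<s+t}"
    then have "Tp s t i w = 0" using Tp_vanish[OF s, where t=t and j=i and f=w] by simp
    then show "sc (c i) (Tp s t i w) = 0" by simp
  qed
  have "lc s t c w = (\<Sum>j<n+(s+t). sc (c j) (Tp s t j w))" unfolding lc_def
    by (rule sum.mono_neutral_left) (use Z in auto)
  ultimately show ?thesis by simp
qed

lemma Rcyclic_eq: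
  assumes s: "0 < s" and w: "w \<in> Rcar s t"
  shows "Rcyclic s t w = cyc s t w"
proof -
  have E: "Rmul s t (\<lambda>a b. \<Sum>j\<le>degree q. coeff q j * Rtheta_pow s t j a b) w = lc s t (coeff q) w"
    for q :: "'a poly"
  proof -
    have "Rmul s t (\<lambda>a b. \<Sum>j\<le>degree q. coeff q j * Rtheta_pow s t j a b) w
        = (\<Sum>j<Suc (degree q). sc (coeff q j) (Tp s t j w))"
      by (simp add: Rmul_lin1 Rmul_pow[OF w] lessThan_Suc_atMost)
    also have "\<dots> = lc s t (coeff q) w"
      using s by (intro lc_trunc) (auto intro: coeff_eq_0)
    finally show ?thesis .
  qed
  show ?thesis
  proof (intro set_eqI iffI)
    fix m assume "m \<in> Rcyclic s t w"
    then obtain q :: "'a poly" where "m = Rmul s t (\<lambda>a b. \<Sum>j\<le>degree q. coeff q j * Rtheta_pow s t j a b) w"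
      unfolding Rcyclic_def by blast
    then show "m \<in> cyc s t w" unfolding cyc_def using E by auto
  next
    fix m assume "m \<in> cyc s t w"
    then obtain c where m: "m = lc s t c w" unfolding cyc_def by blast
    define q where "q = (\<Sum>j<s+t. monom (c j) j)"
    have cq: "coeff q j = (if j < s + t then c j else 0)" for j
      unfolding q_def by (simp add: coeff_sum sum.delta)
    have "lc s t (coeff q) w = lc s t c w" unfolding lc_def by (intro sum.cong) (auto simp: cq)
    then have "m = Rmul s t (\<lambda>a b. \<Sum>j\<le>degree q. coeff q j * Rtheta_pow s t j a b) w"
      using E m by simp
    then show "m \<in> Rcyclic s t w" unfolding Rcyclic_def by blast
  qed
qed

lemma sc_add: "sc a (u + v) = sc a u + sc a v" by (simp add: sc_def fun_eq_iff algebra_simps)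
lemma sc_add2: "sc a u + sc b u = sc (a + b) u" by (simp add: sc_def fun_eq_iff algebra_simps)
lemma sc_sc: "sc a (sc b u) = sc (a * b) u" by (simp add: sc_def fun_eq_iff algebra_simps)
lemma sc_m1: "sc (-1) u = - u" by (simp add: sc_def fun_eq_iff)
lemma sc_apply: "sc a u x y = a * u x y" by (simp add: sc_def)

definition subsp :: "nat \<Rightarrow> nat \<Rightarrow> 'a::field vec set \<Rightarrow> bool" where
  "subsp s t V \<longleftrightarrow> V \<subseteq> Rcar s t \<and> 0 \<in> V \<and> (\<forall>u\<in>V. \<forall>v\<in>V. u + v \<in> V) \<and>
     (\<forall>c. \<forall>u\<in>V. sc c u \<in> V) \<and> (\<forall>u\<in>V. Tx s t u \<in> V) \<and> (\<forall>d. \<forall>u\<in>V. cmp d u \<in> V)"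

lemma subsp_Rcar: "subsp s t (Rcar s t)"
proof -
  have "Rcar s t \<subseteq> Rcar s t" by simp
  moreover have "(0::'a vec) \<in> Rcar s t" by (simp add: Rcar_def)
  moreover have "\<forall>u\<in>Rcar s t. \<forall>v\<in>Rcar s t. u + v \<in> (Rcar s t :: 'a vec set)" by (simp add: Rcar_def)
  moreover have "\<forall>c. \<forall>u\<in>Rcar s t. sc c u \<in> (Rcar s t :: 'a vec set)" by (simp add: Rcar_def sc_def)
  moreover have "\<forall>u\<in>Rcar s t. Tx s t u \<in> (Rcar s t :: 'a vec set)" by (simp add: Tx_Rcar)
  moreover have "\<forall>d. \<forall>u\<in>Rcar s t. cmp d u \<in> (Rcar s t :: 'a vec set)" by (simp add: cmp_Rcar)
  ultimately show ?thesis unfolding subsp_def by blast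
qed

lemma subsp_add: "subsp s t V \<Longrightarrow> u \<in> V \<Longrightarrow> v \<in> V \<Longrightarrow> u + v \<in> V"
  unfolding subsp_def by blast
lemma subsp_0: "subsp s t V \<Longrightarrow> 0 \<in> V"
  unfolding subsp_def by blast
lemma subsp_sc: "subsp s t V \<Longrightarrow> u \<in> V \<Longrightarrow> sc c u \<in> V"
  unfolding subsp_def by blast
lemma subsp_Tx: "subsp s t V \<Longrightarrow> u \<in> V \<Longrightarrow> Tx s t u \<in> V"
  unfolding subsp_def by blast
lemma subsp_cmp: "subsp s t V \<Longrightarrow> u \<in> V \<Longrightarrow> cmp d u \<in> V"
  unfolding subsp_def by blast
lemma subsp_R: "subsp s t V \<Longrightarrow> u \<in> V \<Longrightarrow> u \<in> Rcar s t"
  unfolding subsp_def by blast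

lemma subsp_sum: "subsp s t V \<Longrightarrow> (\<forall>i\<in>A. F i \<in> V) \<Longrightarrow> sum F A \<in> V"
proof (induction A rule: infinite_finite_induct)
  case (infinite A) then show ?case by (metis sum.infinite subsp_0)
next
  case empty then show ?case by (metis sum.empty subsp_0)
next
  case (insert x A)
  then have "F x \<in> V" "sum F A \<in> V" by simp_all
  then have "F x + sum F A \<in> V" using subsp_add[OF insert.prems(1)] by blast
  moreover have "sum F (insert x A) = F x + sum F A" using insert.hyps by (rule sum.insert)
  ultimately show ?case by metis
qed

lemma subsp_Tp: "subsp s t V \<Longrightarrow> u \<in> V \<Longrightarrow> Tp s t j u \<in> V"
  by (induction j) (simp_all add: subsp_Tx)

lemma subsp_lc: "subsp s t V \<Longrightarrow> u \<in> V \<Longrightarrow> lc s t c u \<in> V"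
  unfolding lc_def by (rule subsp_sum) (auto intro: subsp_sc subsp_Tp)

lemma subsp_neg: "subsp s t V \<Longrightarrow> u \<in> V \<Longrightarrow> - u \<in> V"
  using sc_m1[of u] subsp_sc[of s t V u "-1"] by simp

lemma subsp_diff: "subsp s t V \<Longrightarrow> u \<in> V \<Longrightarrow> v \<in> V \<Longrightarrow> u - v \<in> V"
  using subsp_neg[of s t V v] subsp_add[of s t V u "- v"] by simp

lemma cyc_sub: "subsp s t V \<Longrightarrow> u \<in> V \<Longrightarrow> cyc s t u \<subseteq> V"
  unfolding cyc_def using subsp_lc by blast

lemma lc_add: "lc s t c w + lc s t c' w = lc s t (\<lambda>j. c j + c' j) w"
  unfolding lc_def by (simp add: sum.distrib[symmetric] sc_add2)

lemma lc_sc: "sc a (lc s t c w) = lc s t (\<lambda>j. a * c j) w"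
proof -
  have "sc a (lc s t c w) = (\<Sum>j<s+t. sc a (sc (c j) (Tp s t j w)))"
    unfolding lc_def by (simp add: sc_def fun_eq_iff fun_sum_apply sum_distrib_left)
  then show ?thesis by (simp add: sc_sc lc_def)
qed

lemma lc_self: "0 < s \<Longrightarrow> lc s t (\<lambda>j. if j = 0 then 1 else 0) w = w"
proof -
  assume s: "0 < s"
  have e: "\<And>j. sc (if j = 0 then 1 else 0) (Tp s t j w) = (if j = 0 then w else 0)" by simp
  have "lc s t (\<lambda>j. if j = 0 then 1 else 0) w = (\<Sum>j<s+t. (if j = 0 then w else 0))"
    unfolding lc_def by (simp only: e)
  also have "\<dots> = w" using s by (simp only: sum.delta finite_lessThan) simp
  finally show ?thesis .
qed

lemma lc_zero: "lc s t (\<lambda>j. 0) w = 0"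
  unfolding lc_def by simp

lemma Tp_lc: "Tp s t i (lc s t c w) = (\<Sum>j<s+t. sc (c j) (Tp s t (i + j) w))"
  unfolding lc_def by (simp add: Tp_sum Tp_sc Tp_plus)

lemma Tx_lc:
  assumes s: "0 < s"
  shows "Tx s t (lc s t c w) = lc s t (\<lambda>j. if j = 0 then 0 else c (j - 1)) w"
proof -
  have "Tx s t (lc s t c w) = (\<Sum>j<s+t. sc (c j) (Tp s t (Suc j) w))"
    using Tp_lc[where i=1 and s=s and t=t and c=c and w=w] by simp
  also have "\<dots> = (\<Sum>j<Suc (s+t). sc (if j = 0 then 0 else c (j - 1)) (Tp s t j w))"
    by (simp only: sum.lessThan_Suc_shift) simp
  also have "\<dots> = lc s t (\<lambda>j. if j = 0 then 0 else c (j - 1)) w"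
    unfolding lc_def using Tp_vanish[OF s, where t=t and j="s+t" and f=w] by simp
  finally show ?thesis .
qed

lemma lc_in_cyc: "lc s t c w \<in> cyc s t w"
  unfolding cyc_def by (rule rangeI)

lemma cyc_add: "m \<in> cyc s t w \<Longrightarrow> m' \<in> cyc s t w \<Longrightarrow> m + m' \<in> cyc s t w"
proof -
  assume "m \<in> cyc s t w" "m' \<in> cyc s t w"
  then obtain c c' where "m = lc s t c w" "m' = lc s t c' w" unfolding cyc_def by blast
  then have e: "m + m' = lc s t (\<lambda>j. c j + c' j) w" by (simp only: lc_add)
  show ?thesis unfolding e by (rule lc_in_cyc)
qed

lemma cyc_sc: "m \<in> cyc s t w \<Longrightarrow> sc a m \<in> cyc s t w"
proof -
  assume "m \<in> cyc s t w"
  then obtain c where "m = lc s t c w" unfolding cyc_def by blast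
  then have e: "sc a m = lc s t (\<lambda>j. a * c j) w" by (simp only: lc_sc)
  show ?thesis unfolding e by (rule lc_in_cyc)
qed

lemma cyc_neg: "m \<in> cyc s t w \<Longrightarrow> - m \<in> cyc s t w"
  using cyc_sc[of m s t w "-1"] by (simp only: sc_m1)

lemma cyc_diff: "m \<in> cyc s t w \<Longrightarrow> m' \<in> cyc s t w \<Longrightarrow> m - m' \<in> cyc s t w"
  using cyc_add[of m s t w "- m'"] cyc_neg[of m' s t w] by (simp only: diff_conv_add_uminus)

lemma cyc_zero: "0 \<in> cyc s t w"
  using lc_in_cyc[of s t "\<lambda>j. 0" w] by (simp only: lc_zero)

lemma cyc_self: "0 < s \<Longrightarrow> w \<in> cyc s t w"
  using lc_in_cyc[of s t "\<lambda>j. if j = 0 then 1 else 0" w] lc_self[of s t w] by simp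

lemma cyc_Tx: "0 < s \<Longrightarrow> m \<in> cyc s t w \<Longrightarrow> Tx s t m \<in> cyc s t w"
proof -
  assume s: "0 < s" and "m \<in> cyc s t w"
  then obtain c where "m = lc s t c w" unfolding cyc_def by blast
  then have e: "Tx s t m = lc s t (\<lambda>j. if j = 0 then 0 else c (j - 1)) w" using Tx_lc[OF s] by simp
  show ?thesis unfolding e by (rule lc_in_cyc)
qed


lemma split_step:
  assumes s: "0 < s" and V: "subsp s t V" and v0: "v0 \<in> V" "v0 \<noteq> 0"
  shows "\<exists>\<omega> W. \<omega> \<in> V \<and> \<omega> \<noteq> 0 \<and> (\<exists>d. Rhomog d \<omega>) \<and> subsp s t W \<and> W \<subseteq> V \<and>
     (\<forall>u\<in>V. \<exists>m\<in>cyc s t \<omega>. u - m \<in> W) \<and> (\<forall>m\<in>cyc s t \<omega>. m \<in> W \<longrightarrow> m = 0)"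
proof -
  have ex: "\<exists>n. \<forall>u\<in>V. Tp s t n u = 0"
    using Tp_vanish[OF s, where t=t and j="s+t"] by blast
  define n where "n = (LEAST n. \<forall>u\<in>V. Tp s t n u = 0)"
  have nV: "\<forall>u\<in>V. Tp s t n u = 0" unfolding n_def by (rule LeastI_ex[OF ex])
  have "n \<noteq> 0"
  proof
    assume "n = 0" then have "Tp s t 0 v0 = 0" using nV v0 by blast
    then show False using v0 by simp
  qed
  then obtain n' where n: "n = Suc n'" by (cases n) auto
  have "\<not> (\<forall>u\<in>V. Tp s t n' u = 0)"
  proof
    assume "\<forall>u\<in>V. Tp s t n' u = 0"
    then have "n \<le> n'" unfolding n_def by (rule Least_le)
    then show False using n by simp
  qed
  then obtain v where v: "v \<in> V" "Tp s t n' v \<noteq> 0" by blast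
  have vR: "v \<in> Rcar s t" using subsp_R[OF V v(1)] .
  have "Tp s t n' v = Tp s t n' (\<Sum>d<s+t. cmp d v)" using Rcar_cmp_sum[OF vR] by metis
  also have "\<dots> = (\<Sum>d<s+t. Tp s t n' (cmp d v))" by (rule Tp_sum)
  finally have "(\<Sum>d<s+t. Tp s t n' (cmp d v)) \<noteq> 0" using v(2) by metis
  then obtain d where d: "Tp s t n' (cmp d v) \<noteq> 0"
    by (metis (mono_tags, lifting) sum.neutral)
  define \<omega> where "\<omega> = cmp d v"
  have \<omega>V: "\<omega> \<in> V" unfolding \<omega>_def by (rule subsp_cmp[OF V v(1)])
  have \<omega>h: "Rhomog d \<omega>" unfolding \<omega>_def by (rule cmp_homog)
  have \<omega>n: "Tp s t n' \<omega> \<noteq> 0" using d \<omega>_def by simp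
  have \<omega>0: "\<omega> \<noteq> 0" using \<omega>n Tp_zero by metis
  have "\<exists>a b. Tp s t n' \<omega> a b \<noteq> 0"
  proof (rule ccontr)
    assume "\<not> (\<exists>a b. Tp s t n' \<omega> a b \<noteq> 0)"
    then have "Tp s t n' \<omega> = 0" by (intro ext) simp
    then show False using \<omega>n by simp
  qed
  then obtain a0 b0 where ab: "Tp s t n' \<omega> a0 b0 \<noteq> 0" by blast
  define \<alpha> where "\<alpha> = Tp s t n' \<omega> a0 b0"
  have \<alpha>0: "\<alpha> \<noteq> 0" using ab \<alpha>_def by simp
  have deg: "a0 + b0 = d + n'" using Tp_homog[OF \<omega>h, where s=s and t=t and j=n'] ab
    unfolding Rhomog_def by blast
  have EV: "Tp s t j \<omega> a0 b0 = (if j = n' then \<alpha> else 0)" for j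
  proof (cases "j = n'")
    case True then show ?thesis by (simp add: \<alpha>_def)
  next
    case False
    have "Tp s t j \<omega> a0 b0 = 0"
    proof (rule ccontr)
      assume "Tp s t j \<omega> a0 b0 \<noteq> 0"
      then have "a0 + b0 = d + j" using Tp_homog[OF \<omega>h, where s=s and t=t and j=j]
        unfolding Rhomog_def by blast
      then show False using deg False by simp
    qed
    then show ?thesis using False by simp
  qed
  have hi: "Tp s t j \<omega> = 0" if "n \<le> j" for j
  proof -
    have "Tp s t j \<omega> = Tp s t (j - n) (Tp s t n \<omega>)" using that Tp_plus[where s=s and t=t and i="j - n" and j=n and f=\<omega>] by simp
    also have "\<dots> = 0" using nV \<omega>V Tp_zero by metis
    finally show ?thesis .
  qed
  have n'N: "n' < s + t"
  proof (rule ccontr)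
    assume "\<not> n' < s + t"
    then have "Tp s t n' \<omega> = 0" using Tp_vanish[OF s, where t=t and j=n' and f=\<omega>] by simp
    then show False using \<omega>n by simp
  qed
  have EVL: "Tp s t j (lc s t c \<omega>) a0 b0 = c (n' - j) * \<alpha>" if j: "j \<le> n'" for c j
  proof -
    have "Tp s t j (lc s t c \<omega>) a0 b0 = (\<Sum>i<s+t. c i * Tp s t (j + i) \<omega> a0 b0)"
      by (simp add: Tp_lc fun_sum_apply sc_apply)
    also have "\<dots> = (\<Sum>i<s+t. if i = n' - j then c i * \<alpha> else 0)"
      using j by (intro sum.cong refl) (auto simp: EV)
    also have "\<dots> = c (n' - j) * \<alpha>" using n'N by (simp add: sum.delta)
    finally show ?thesis .
  qed
  define W where "W = {u\<in>V. \<forall>j\<le>n'. Tp s t j u a0 b0 = 0}"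
  have WV: "W \<subseteq> V" unfolding W_def by blast
  have sW: "subsp s t W" unfolding subsp_def
  proof (intro conjI ballI allI)
    show "W \<subseteq> Rcar s t" using WV subsp_R[OF V] by blast
    show "0 \<in> W" unfolding W_def using subsp_0[OF V] by (simp add: Tp_zero)
  next
    fix u v assume u: "u \<in> W" and v: "v \<in> W"
    show "u + v \<in> W" using u v subsp_add[OF V] unfolding W_def by (simp add: Tp_add)
  next
    fix c u assume u: "u \<in> W"
    show "sc c u \<in> W" using u subsp_sc[OF V] unfolding W_def by (simp add: Tp_sc sc_apply)
  next
    fix u assume u: "u \<in> W"
    have "Tp s t j (Tx s t u) a0 b0 = 0" if j: "j \<le> n'" for j
    proof (cases "Suc j \<le> n'")
      case True then show ?thesis using u unfolding W_def Tp_Suc'[symmetric] by blast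
    next
      case False
      then have "Suc j = n" using j n by simp
      then show ?thesis using u nV unfolding W_def Tp_Suc'[symmetric] by auto
    qed
    then show "Tx s t u \<in> W" using u subsp_Tx[OF V] unfolding W_def by blast
  next
    fix e u assume u: "u \<in> W"
    have "Tp s t j (cmp e u) a0 b0 = 0" if j: "j \<le> n'" for j
      using u j unfolding W_def Tp_cmp by (simp add: cmp_def)
    then show "cmp e u \<in> W" using u subsp_cmp[OF V] unfolding W_def by blast
  qed
  have dec: "\<exists>m\<in>cyc s t \<omega>. u - m \<in> W" if u: "u \<in> V" for u
  proof -
    define c where "c i = (if i \<le> n' then Tp s t (n' - i) u a0 b0 / \<alpha> else 0)" for i
    define m where "m = lc s t c \<omega>"
    have mc: "m \<in> cyc s t \<omega>" unfolding m_def by (rule lc_in_cyc)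
    have "u - m \<in> V" unfolding m_def by (rule subsp_diff[OF V u subsp_lc[OF V \<omega>V]])
    moreover have "Tp s t j (u - m) a0 b0 = 0" if j: "j \<le> n'" for j
    proof -
      have "Tp s t j (u - m) a0 b0 = Tp s t j u a0 b0 - c (n' - j) * \<alpha>"
        using EVL[OF j] by (simp add: Tp_diff m_def)
      also have "c (n' - j) * \<alpha> = Tp s t j u a0 b0" using j \<alpha>0 by (simp add: c_def)
      finally show ?thesis by (simp only: diff_self)
    qed
    ultimately have "u - m \<in> W" unfolding W_def by blast
    then show ?thesis using mc by blast
  qed
  have inter: "m = 0" if m: "m \<in> cyc s t \<omega>" "m \<in> W" for m
  proof -
    obtain c where mc: "m = lc s t c \<omega>" using m(1) unfolding cyc_def by blast
    have c0: "c i = 0" if i: "i \<le> n'" for i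
    proof -
      have "Tp s t (n' - i) m a0 b0 = 0" using m(2) unfolding W_def by simp
      moreover have "Tp s t (n' - i) m a0 b0 = c i * \<alpha>" using EVL[of "n' - i" c] i mc by simp
      ultimately show ?thesis using \<alpha>0 by simp
    qed
    have "\<forall>i\<in>{..<s+t}. sc (c i) (Tp s t i \<omega>) = 0"
    proof
      fix i assume "i \<in> {..<s+t}"
      show "sc (c i) (Tp s t i \<omega>) = 0"
      proof (cases "i \<le> n'")
        case True then show ?thesis using c0 by simp
      next
        case False then have "Tp s t i \<omega> = 0" using hi n by simp
        then show ?thesis by simp
      qed
    qed
    then have "lc s t c \<omega> = 0" unfolding lc_def by (rule sum.neutral)
    then show ?thesis using mc by simp
  qed
  show ?thesis using \<omega>V \<omega>0 \<omega>h sW WV dec inter by blast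
qed

definition PD :: "nat \<Rightarrow> nat \<Rightarrow> (nat \<Rightarrow> 'a::field vec) \<Rightarrow> nat \<Rightarrow> 'a vec set \<Rightarrow> bool" where
  "PD s t w k V \<longleftrightarrow> subsp s t V \<and>
     (\<forall>i<k. w i \<in> Rcar s t \<and> w i \<noteq> 0 \<and> (\<exists>d. Rhomog d (w i))) \<and>
     (\<forall>r\<in>Rcar s t. \<exists>m v. (\<forall>i<k. m i \<in> cyc s t (w i)) \<and> v \<in> V \<and> r = (\<Sum>i<k. m i) + v) \<and>
     (\<forall>m v. (\<forall>i<k. m i \<in> cyc s t (w i)) \<and> v \<in> V \<and> (\<Sum>i<k. m i) + v = 0 \<longrightarrow>
        (\<forall>i<k. m i = 0) \<and> v = 0)"

lemma PD_init: "PD s t w 0 (Rcar s t)"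
  unfolding PD_def using subsp_Rcar by auto

lemma PD_step:
  assumes s: "0 < s" and P: "PD s t w k V" and v0: "v0 \<in> V" "v0 \<noteq> 0"
  shows "\<exists>\<omega> W. PD s t (w(k := \<omega>)) (Suc k) W"
proof -
  have V: "subsp s t V" using P unfolding PD_def by blast
  obtain \<omega> W where \<omega>V: "\<omega> \<in> V" and \<omega>0: "\<omega> \<noteq> 0" and \<omega>h: "\<exists>d. Rhomog d \<omega>" and sW: "subsp s t W"
    and WV: "W \<subseteq> V" and dec: "\<forall>u\<in>V. \<exists>m\<in>cyc s t \<omega>. u - m \<in> W"
    and inter: "\<forall>m\<in>cyc s t \<omega>. m \<in> W \<longrightarrow> m = 0"
    using split_step[OF s V v0] by blast
  let ?w = "w(k := \<omega>)"
  have gen: "\<forall>i<Suc k. ?w i \<in> Rcar s t \<and> ?w i \<noteq> 0 \<and> (\<exists>d. Rhomog d (?w i))"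
  proof (intro allI impI)
    fix i assume i: "i < Suc k"
    show "?w i \<in> Rcar s t \<and> ?w i \<noteq> 0 \<and> (\<exists>d. Rhomog d (?w i))"
    proof (cases "i = k")
      case True then show ?thesis using \<omega>V \<omega>0 \<omega>h subsp_R[OF V] by simp
    next
      case False then have "i < k" using i by simp
      have G: "\<forall>i<k. w i \<in> Rcar s t \<and> w i \<noteq> 0 \<and> (\<exists>d. Rhomog d (w i))"
        using P unfolding PD_def by (elim conjE)
      then show ?thesis using \<open>i < k\<close> False by simp
    qed
  qed
  have ex: "\<exists>m v. (\<forall>i<Suc k. m i \<in> cyc s t (?w i)) \<and> v \<in> W \<and> r = (\<Sum>i<Suc k. m i) + v"
    if r: "r \<in> Rcar s t" for r
  proof -
    have E: "\<forall>r\<in>Rcar s t. \<exists>m v. (\<forall>i<k. m i \<in> cyc s t (w i)) \<and> v \<in> V \<and> r = (\<Sum>i<k. m i) + v"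
      using P unfolding PD_def by (elim conjE)
    obtain m v where m: "\<forall>i<k. m i \<in> cyc s t (w i)" and v: "v \<in> V" and r: "r = (\<Sum>i<k. m i) + v"
      using E r by blast
    obtain m\<omega> where m\<omega>: "m\<omega> \<in> cyc s t \<omega>" "v - m\<omega> \<in> W" using dec v by blast
    define m' where "m' = m(k := m\<omega>)"
    have "(\<Sum>i<Suc k. m' i) = (\<Sum>i<k. m' i) + m' k" by (rule sum.lessThan_Suc)
    also have "(\<Sum>i<k. m' i) = (\<Sum>i<k. m i)" unfolding m'_def by (intro sum.cong) auto
    finally have "(\<Sum>i<Suc k. m' i) = (\<Sum>i<k. m i) + m\<omega>" unfolding m'_def by simp
    then have "r = (\<Sum>i<Suc k. m' i) + (v - m\<omega>)" using r
      by (metis (no_types) add.assoc diff_add_cancel add.commute)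
    moreover have "\<forall>i<Suc k. m' i \<in> cyc s t (?w i)" using m m\<omega> unfolding m'_def by auto
    ultimately show ?thesis using m\<omega>(2) by blast
  qed
  have un: "(\<forall>i<Suc k. m i = 0) \<and> v = 0"
    if m: "\<forall>i<Suc k. m i \<in> cyc s t (?w i)" and v: "v \<in> W" and z: "(\<Sum>i<Suc k. m i) + v = 0" for m v
  proof -
    have mk: "m k \<in> cyc s t \<omega>" using m[rule_format, of k] by simp
    have mi: "\<forall>i<k. m i \<in> cyc s t (w i)"
    proof (intro allI impI)
      fix i assume "i < k"
      then show "m i \<in> cyc s t (w i)" using m[rule_format, of i] by simp
    qed
    have "m k + v \<in> V" using subsp_add[OF V] cyc_sub[OF V \<omega>V] mk v WV by blast
    moreover have "(\<Sum>i<Suc k. m i) = (\<Sum>i<k. m i) + m k" by (rule sum.lessThan_Suc)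
    then have "(\<Sum>i<k. m i) + (m k + v) = 0" using z by (metis add.assoc)
    moreover have U: "\<forall>m v. (\<forall>i<k. m i \<in> cyc s t (w i)) \<and> v \<in> V \<and> (\<Sum>i<k. m i) + v = 0 \<longrightarrow>
        (\<forall>i<k. m i = 0) \<and> v = 0" using P unfolding PD_def by (elim conjE)
    ultimately have A: "(\<forall>i<k. m i = 0) \<and> m k + v = 0" using mi by blast
    then have "m k = - v" by (simp add: eq_neg_iff_add_eq_0)
    then have "m k \<in> W" using subsp_neg[OF sW v] by simp
    then have "m k = 0" using inter mk by blast
    then have "v = 0" using A by simp
    then show ?thesis using A \<open>m k = 0\<close> by (auto simp: less_Suc_eq)
  qed
  have "PD s t ?w (Suc k) W" unfolding PD_def
  proof (intro conjI)
    show "subsp s t W" by (rule sW)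
    show "\<forall>i<Suc k. ?w i \<in> Rcar s t \<and> ?w i \<noteq> 0 \<and> (\<exists>d. Rhomog d (?w i))" by (rule gen)
    show "\<forall>r\<in>Rcar s t. \<exists>m v. (\<forall>i<Suc k. m i \<in> cyc s t (?w i)) \<and> v \<in> W \<and> r = (\<Sum>i<Suc k. m i) + v"
      using ex by blast
    show "\<forall>m v. (\<forall>i<Suc k. m i \<in> cyc s t (?w i)) \<and> v \<in> W \<and> (\<Sum>i<Suc k. m i) + v = 0 \<longrightarrow>
        (\<forall>i<Suc k. m i = 0) \<and> v = 0" using un by blast
  qed
  then show ?thesis by blast
qed

definition phi :: "nat \<Rightarrow> 'a::field vec \<Rightarrow> 'a" where
  "phi d g = (\<Sum>b\<le>d. (-1) ^ b * g (d - b) b)"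

definition Xm :: "nat \<Rightarrow> 'a::field vec" where
  "Xm e = (\<lambda>a b. if a = e \<and> b = 0 then 1 else 0)"

definition Em :: "nat \<Rightarrow> nat \<Rightarrow> 'a::field vec" where
  "Em a0 b0 = (\<lambda>a b. if a = a0 \<and> b = b0 then 1 else 0)"

definition Lx :: "nat \<Rightarrow> 'a::field vec \<Rightarrow> 'a vec" where
  "Lx s g = (\<Sum>e<s. sc (phi e g) (Xm e))"

lemma phi_add: "phi d (f + g) = phi d f + phi d g"
  by (simp add: phi_def sum.distrib algebra_simps)

lemma phi_sc: "phi d (sc c f) = c * phi d f"
  by (simp add: phi_def sc_def sum_distrib_left algebra_simps)

lemma phi_zero: "phi d 0 = 0"
  by (simp add: phi_def)

lemma phi_sum: "phi d (sum F A) = (\<Sum>i\<in>A. phi d (F i))"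
proof -
  have "sum (phi d \<circ> F) A = phi d (sum F A)"
    by (rule sum_comp_morphism) (simp_all add: phi_zero phi_add)
  then show ?thesis by (simp add: o_def)
qed

lemma phi_homog: "Rhomog e f \<Longrightarrow> e \<noteq> d \<Longrightarrow> phi d f = 0"
  unfolding phi_def Rhomog_def by (intro sum.neutral) force

lemma phi_Em: "phi e (Em a0 b0) = (if a0 + b0 = e then (-1) ^ b0 else 0)"
proof -
  have "phi e (Em a0 b0) = (\<Sum>b\<le>e. if b = b0 then (if a0 + b0 = e then (-1) ^ b0 else 0) else 0)"
    unfolding phi_def Em_def by (intro sum.cong refl) auto
  also have "\<dots> = (if a0 + b0 = e then (-1) ^ b0 else 0)" by (simp add: sum.delta)
  finally show ?thesis .
qed

lemma phi_Tx:
  assumes ds: "d < s" and st: "s \<le> t"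
  shows "phi d (Tx s t h) = 0"
proof -
  have "phi d (Tx s t h) = (\<Sum>b\<le>d. (if b < d then (-1) ^ b * h (d - b - 1) b else 0))
      + (\<Sum>b\<le>d. (if 0 < b then (-1) ^ b * h (d - b) (b - 1) else 0))"
    unfolding phi_def Tx_def sum.distrib[symmetric]
    using ds st by (intro sum.cong refl) (auto simp: algebra_simps)
  also have "\<dots> = 0"
  proof (cases d)
    case 0 then show ?thesis by simp
  next
    case (Suc d')
    have 1: "(\<Sum>b\<le>d. (if b < d then (-1) ^ b * h (d - b - 1) b else 0)) = (\<Sum>b\<le>d'. (-1) ^ b * h (d' - b) b)"
      unfolding Suc by (simp del: sum.atMost_Suc add: sum.atMost_Suc[of _ d'] Suc_diff_le)
    have 2: "(\<Sum>b\<le>d. (if 0 < b then (-1) ^ b * h (d - b) (b - 1) else 0)) = (\<Sum>b\<le>d'. - ((-1) ^ b * h (d' - b) b))"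
      unfolding Suc by (simp del: sum.atMost_Suc add: sum.atMost_Suc_shift)
    show ?thesis unfolding 1 2 by (simp add: sum_negf)
  qed
  finally show ?thesis .
qed

lemma Lx_add: "Lx s (f + g) = Lx s f + Lx s g"
  unfolding Lx_def by (simp add: phi_add sum.distrib[symmetric] sc_add2)

lemma Lx_sc: "Lx s (sc c f) = sc c (Lx s f)"
proof -
  have "sc c (Lx s f) = (\<Sum>e<s. sc c (sc (phi e f) (Xm e)))"
    unfolding Lx_def by (simp add: sc_def fun_eq_iff fun_sum_apply sum_distrib_left)
  then show ?thesis unfolding Lx_def by (simp add: phi_sc sc_sc)
qed

lemma Xm_Em: "Xm e = Em e 0"
  by (simp add: Xm_def Em_def)

lemma Lx_Em: "a0 < s \<Longrightarrow> Lx s (Em a0 0) = Em a0 0"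
proof -
  assume a: "a0 < s"
  have e: "\<And>e. sc (phi e (Em a0 0)) (Xm e) = (if e = a0 then Em a0 0 else 0)"
    by (simp add: phi_Em Xm_Em)
  have "Lx s (Em a0 0) = (\<Sum>e<s. if e = a0 then Em a0 0 else 0)"
    unfolding Lx_def by (simp only: e)
  also have "\<dots> = Em a0 0" using a by (simp only: sum.delta finite_lessThan) simp
  finally show ?thesis .
qed

lemma Lx_Em_neg: "Lx s (Em a0 (Suc b0)) = - Lx s (Em (Suc a0) b0)"
proof -
  have e: "\<And>e. sc (phi e (Em a0 (Suc b0))) (Xm e) = - sc (phi e (Em (Suc a0) b0)) (Xm e)"
    by (simp add: phi_Em sc_def fun_eq_iff)
  have "Lx s (Em a0 (Suc b0)) = (\<Sum>e<s. - sc (phi e (Em (Suc a0) b0)) (Xm e))"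
    unfolding Lx_def by (simp only: e)
  also have "\<dots> = - Lx s (Em (Suc a0) b0)" unfolding Lx_def by (rule sum_negf)
  finally show ?thesis .
qed

lemma Lx_Em_zero: "s \<le> a0 + b0 \<Longrightarrow> Lx s (Em a0 b0) = 0"
  unfolding Lx_def by (intro sum.neutral) (auto simp: phi_Em)

lemma Tx_Em:
  assumes "a < s" "Suc b < t"
  shows "Tx s t (Em a b) = (if Suc a < s then Em (Suc a) b else 0) + Em a (Suc b)"
proof (intro ext)
  fix x y
  have 1: "(0 < x \<and> x - 1 = a) = (x = Suc a)" by arith
  have 2: "(0 < y \<and> y - 1 = b) = (y = Suc b)" by arith
  show "Tx s t (Em a b) x y = ((if Suc a < s then Em (Suc a) b else 0) + Em a (Suc b)) x y"
    unfolding Tx_def Em_def using assms 1 2 by (cases "Suc a < s") auto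
qed

lemma Em_Rcar: "a < s \<Longrightarrow> b < t \<Longrightarrow> Em a b \<in> Rcar s t"
  by (auto simp: Em_def Rcar_def)

lemma Lx_zero: "Lx s 0 = 0"
  unfolding Lx_def by (simp add: phi_zero)

lemma Rcar_diff: "f \<in> Rcar s t \<Longrightarrow> g \<in> Rcar s t \<Longrightarrow> f - g \<in> Rcar s t"
  by (rule subsp_diff[OF subsp_Rcar])

lemma Rcar_add: "f \<in> Rcar s t \<Longrightarrow> g \<in> Rcar s t \<Longrightarrow> f + g \<in> Rcar s t"
  by (rule subsp_add[OF subsp_Rcar])

lemma Rcar_sc: "f \<in> Rcar s t \<Longrightarrow> sc c f \<in> Rcar s t"
  by (rule subsp_sc[OF subsp_Rcar])

lemma Rcar_zero: "0 \<in> Rcar s t"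
  by (rule subsp_0[OF subsp_Rcar])

lemma S_Em: "a < s \<Longrightarrow> b < t \<Longrightarrow> \<exists>h\<in>Rcar s t. Em a b = Tx s t h + Lx s (Em a b)"
proof (induction b arbitrary: a)
  case 0
  then have "Em a 0 = Tx s t 0 + Lx s (Em a 0)" by (simp add: Tx_zero Lx_Em)
  then show ?case using Rcar_zero by blast
next
  case (Suc b)
  have T: "Tx s t (Em a b) = ((if Suc a < s then Em (Suc a) b else 0) + Em a (Suc b) :: 'a vec)"
    using Suc.prems by (intro Tx_Em) auto
  show ?case
  proof (cases "Suc a < s")
    case True
    have bt: "b < t" using Suc.prems by simp
    obtain h1 :: "'a vec" where h1: "h1 \<in> Rcar s t" "Em (Suc a) b = Tx s t h1 + Lx s (Em (Suc a) b)"
      using Suc.IH[OF True bt] by blast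
    have "Tx s t (Em a b - h1) = Em (Suc a) b + Em a (Suc b) - Tx s t h1"
      using T True by (simp add: Tx_diff)
    also have "\<dots> = Em a (Suc b) + Lx s (Em (Suc a) b)"
      using h1(2) by (simp add: algebra_simps)
    finally have "Em a (Suc b) = Tx s t (Em a b - h1) + Lx s (Em a (Suc b))"
      by (simp add: Lx_Em_neg)
    moreover have "Em a b - h1 \<in> Rcar s t" using Suc.prems h1(1) by (intro Rcar_diff Em_Rcar) auto
    ultimately show ?thesis by blast
  next
    case False
    then have "Lx s (Em a (Suc b) :: 'a vec) = 0" by (intro Lx_Em_zero) simp
    then have "Em a (Suc b) = (Tx s t (Em a b) + Lx s (Em a (Suc b)) :: 'a vec)" using T False by simp
    moreover have "(Em a b :: 'a vec) \<in> Rcar s t" using Suc.prems by (intro Em_Rcar) auto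
    ultimately show ?thesis by blast
  qed
qed

lemma S_all:
  assumes g: "g \<in> Rcar s t"
  shows "\<exists>h\<in>Rcar s t. g = Tx s t h + Lx s g"
proof -
  define P where "P f \<longleftrightarrow> (\<exists>h\<in>Rcar s t. f = Tx s t h + Lx s f)" for f :: "'a vec"
  have Padd: "P (f + f')" if Pf: "P f" and Pf': "P f'" for f f'
  proof -
    obtain h h' where "h \<in> Rcar s t" "f = Tx s t h + Lx s f" "h' \<in> Rcar s t" "f' = Tx s t h' + Lx s f'"
      using Pf Pf' unfolding P_def by blast
    then have "f + f' = Tx s t (h + h') + Lx s (f + f')" "h + h' \<in> Rcar s t"
      by (simp_all add: Tx_add Lx_add Rcar_add algebra_simps)
    then show ?thesis unfolding P_def by blast
  qed
  have Psc: "P (sc c f)" if Pf: "P f" for c f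
  proof -
    obtain h where "h \<in> Rcar s t" "f = Tx s t h + Lx s f"
      using Pf unfolding P_def by blast
    then have "sc c f = Tx s t (sc c h) + Lx s (sc c f)" "sc c h \<in> Rcar s t"
      by (metis Tx_sc Lx_sc sc_add, simp add: Rcar_sc)
    then show ?thesis unfolding P_def by blast
  qed
  have "(0::'a vec) = Tx s t 0 + Lx s 0" by (simp add: Tx_zero Lx_zero)
  then have P0: "P 0" unfolding P_def using Rcar_zero by blast
  define Q where "Q p = sc (g (fst p) (snd p)) (Em (fst p) (snd p))" for p
  have PS: "S \<subseteq> {..<s} \<times> {..<t} \<Longrightarrow> P (sum Q S)" for S
  proof (induction S rule: infinite_finite_induct)
    case (infinite A)
    have "sum Q A = 0" using infinite.hyps by (rule sum.infinite)
    then show ?case using P0 by (simp only:)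
  next
    case empty
    have "sum Q {} = 0" by (rule sum.empty)
    then show ?case using P0 by (simp only:)
  next
    case (insert p F)
    have pin: "fst p < s" "snd p < t" using insert.prems by auto
    have "P (Em (fst p) (snd p))" unfolding P_def by (rule S_Em[OF pin])
    then have "P (Q p)" unfolding Q_def by (rule Psc)
    moreover have "P (sum Q F)" using insert by simp
    ultimately have "P (Q p + sum Q F)" by (rule Padd)
    moreover have "sum Q (insert p F) = Q p + sum Q F" using insert.hyps by (rule sum.insert)
    ultimately show ?case by metis
  qed
  have "g = sum Q ({..<s} \<times> {..<t})"
  proof (intro ext)
    fix x y
    have "sum Q ({..<s} \<times> {..<t}) x y = (\<Sum>p\<in>{..<s} \<times> {..<t}. if p = (x, y) then g x y else 0)"
      unfolding fun_sum_apply Q_def by (intro sum.cong) (auto simp: sc_def Em_def)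
    also have "\<dots> = g x y" using g by (auto simp: sum.delta Rcar_def)
    finally show "g x y = sum Q ({..<s} \<times> {..<t}) x y" by simp
  qed
  then show ?thesis using PS[of "{..<s} \<times> {..<t}"] unfolding P_def by auto
qed

lemma Tx_lc_low:
  assumes "Rhomog d w" "a + b = d"
  shows "Tx s t (lc s t c w) a b = 0"
proof -
  have "Tx s t (lc s t c w) = (\<Sum>j<s+t. sc (c j) (Tp s t (1 + j) w))"
    using Tp_lc[where i=1 and s=s and t=t and c=c and w=w] by simp
  moreover have "Tp s t (1 + j) w a b = 0" for j
  proof (rule ccontr)
    assume ne: "Tp s t (1 + j) w a b \<noteq> 0"
    have "Rhomog (d + (1 + j)) (Tp s t (1 + j) w)" by (rule Tp_homog[OF assms(1)])
    then have "a + b = d + (1 + j)" using ne unfolding Rhomog_def by blast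
    then show False using assms(2) by simp
  qed
  ultimately show ?thesis by (simp add: fun_sum_apply sc_apply)
qed

lemma PD_gen: "PD s t w k V \<Longrightarrow> l < k \<Longrightarrow> w l \<in> Rcar s t \<and> w l \<noteq> 0 \<and> (\<exists>d. Rhomog d (w l))"
  unfolding PD_def by blast

lemma PD_sub: "PD s t w k V \<Longrightarrow> subsp s t V"
  unfolding PD_def by blast

lemma PD_ex: "PD s t w k V \<Longrightarrow> r \<in> Rcar s t \<Longrightarrow>
    \<exists>m v. (\<forall>i<k. m i \<in> cyc s t (w i)) \<and> v \<in> V \<and> r = (\<Sum>i<k. m i) + v"
  unfolding PD_def by blast

lemma PD_un: "PD s t w k V \<Longrightarrow> (\<forall>i<k. m i \<in> cyc s t (w i)) \<Longrightarrow> v \<in> V \<Longrightarrow> (\<Sum>i<k. m i) + v = 0 \<Longrightarrow>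
    (\<forall>i<k. m i = 0) \<and> v = 0"
  unfolding PD_def by blast

lemma PD_H:
  assumes s: "0 < s" and P: "PD s t w k V" and h: "h \<in> Rcar s t"
    and eq: "Tx s t h = (\<Sum>i<k. sc (\<beta> i) (w i))" and l: "l < k"
  shows "\<beta> l = 0"
proof -
  obtain m v where m: "\<forall>i<k. m i \<in> cyc s t (w i)" and v: "v \<in> V" and hv: "h = (\<Sum>i<k. m i) + v"
    using PD_ex[OF P h] by blast
  define m' where "m' i = Tx s t (m i) - sc (\<beta> i) (w i)" for i
  have T: "Tx s t h = (\<Sum>i<k. Tx s t (m i)) + Tx s t v" unfolding hv by (simp only: Tx_add Tx_sum)
  have "(\<Sum>i<k. m' i) = (\<Sum>i<k. Tx s t (m i)) - (\<Sum>i<k. sc (\<beta> i) (w i))"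
    unfolding m'_def by (rule sum_subtractf)
  then have "(\<Sum>i<k. m' i) + Tx s t v = ((\<Sum>i<k. Tx s t (m i)) + Tx s t v) - (\<Sum>i<k. sc (\<beta> i) (w i))"
    by (simp only: diff_add_eq)
  also have "\<dots> = 0" by (simp only: T[symmetric] eq diff_self)
  finally have "(\<Sum>i<k. m' i) + Tx s t v = 0" .
  moreover have "\<forall>i<k. m' i \<in> cyc s t (w i)"
  proof (intro allI impI)
    fix i assume i: "i < k"
    have "Tx s t (m i) \<in> cyc s t (w i)" using m i cyc_Tx[OF s] by blast
    moreover have "sc (\<beta> i) (w i) \<in> cyc s t (w i)" by (rule cyc_sc[OF cyc_self[OF s]])
    ultimately show "m' i \<in> cyc s t (w i)" unfolding m'_def by (rule cyc_diff)
  qed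
  moreover have "Tx s t v \<in> V" using subsp_Tx[OF PD_sub[OF P] v] .
  ultimately have "\<forall>i<k. m' i = 0" using PD_un[OF P] by blast
  then have e: "Tx s t (m l) = sc (\<beta> l) (w l)" using l unfolding m'_def by simp
  obtain d where d: "Rhomog d (w l)" and w0: "w l \<noteq> 0" using PD_gen[OF P l] by blast
  obtain a b where ab: "w l a b \<noteq> 0"
  proof -
    have "\<exists>a b. w l a b \<noteq> 0"
    proof (rule ccontr)
      assume "\<not> (\<exists>a b. w l a b \<noteq> 0)"
      then have "w l = 0" by (intro ext) simp
      then show False using w0 by simp
    qed
    then show ?thesis using that by blast
  qed
  have abd: "a + b = d" using d ab unfolding Rhomog_def by blast
  obtain c where "m l = lc s t c (w l)" using m l unfolding cyc_def by blast
  then have "Tx s t (m l) a b = 0" using Tx_lc_low[OF d abd] by simp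
  then have "\<beta> l * w l a b = 0" using e by (simp add: sc_apply)
  then show ?thesis using ab by simp
qed

lemma homog_decomp:
  assumes g: "g \<in> Rcar s t" and d: "Rhomog d g"
  shows "\<exists>h\<in>Rcar s t. g = Tx s t h + (if d < s then sc (phi d g) (Xm d) else 0)"
proof -
  have e: "sc (phi e g) (Xm e) = (if e = d then sc (phi d g) (Xm d) else 0)" for e
  proof (cases "e = d")
    case False
    then have "phi e g = 0" using phi_homog[OF d] by metis
    then show ?thesis using False by (simp only: sc_0 if_False)
  qed simp
  have "Lx s g = (\<Sum>e<s. if e = d then sc (phi d g) (Xm d) else 0)"
    unfolding Lx_def by (rule sum.cong[OF refl e])
  also have "\<dots> = (if d < s then sc (phi d g) (Xm d) else 0)"
    by (simp only: sum.delta finite_lessThan lessThan_iff)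
  finally have L: "Lx s g = (if d < s then sc (phi d g) (Xm d) else 0)" .
  obtain h where h: "h \<in> Rcar s t" and hg: "g = Tx s t h + Lx s g" using S_all[OF g] by blast
  from hg have "g = Tx s t h + (if d < s then sc (phi d g) (Xm d) else 0)" by (simp only: L)
  then show ?thesis using h by (rule bexI)
qed

lemma sum_delta_sc:
  fixes k :: nat
  assumes "l < k"
  shows "(\<Sum>i<k. sc (if i = l then c else 0) (w i)) = sc c (w l)"
proof -
  have e: "\<And>i. sc (if i = l then c else 0) (w i) = (if i = l then sc c (w l) else 0)" by simp
  show ?thesis unfolding e using assms by (subst sum.delta) auto
qed

lemma deg_ok:
  assumes s: "0 < s" and P: "PD s t w k V" and l: "l < k" and d: "Rhomog d (w l)"
  shows "d < s \<and> phi d (w l) \<noteq> 0"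
proof (rule ccontr)
  assume A: "\<not> (d < s \<and> phi d (w l) \<noteq> 0)"
  have wR: "w l \<in> Rcar s t" using PD_gen[OF P l] by blast
  obtain h where h: "h \<in> Rcar s t" "w l = Tx s t h + (if d < s then sc (phi d (w l)) (Xm d) else 0)"
    using homog_decomp[OF wR d] by blast
  have "(if d < s then sc (phi d (w l)) (Xm d) else 0) = 0" using A by auto
  then have "Tx s t h = (\<Sum>i<k. sc (if i = l then 1 else 0) (w i))"
    using h(2) sum_delta_sc[OF l, of 1 w] by simp
  then have "(if l = l then 1 else 0 :: 'a) = 0" by (rule PD_H[OF s P h(1) _ l])
  then show False by simp
qed

lemma deg_distinct:
  assumes s: "0 < s" and P: "PD s t w k V" and l: "l < k" and l': "l' < k" and ne: "l \<noteq> l'"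
    and d: "Rhomog d (w l)" and d': "Rhomog d (w l')"
  shows False
proof -
  have A: "d < s" "phi d (w l) \<noteq> 0" using deg_ok[OF s P l d] by auto
  have A': "phi d (w l') \<noteq> 0" using deg_ok[OF s P l' d'] by auto
  define \<alpha> where "\<alpha> = phi d (w l)"
  define \<alpha>' where "\<alpha>' = phi d (w l')"
  have wR: "w l \<in> Rcar s t" using PD_gen[OF P l] by blast
  have wR': "w l' \<in> Rcar s t" using PD_gen[OF P l'] by blast
  obtain h where h: "h \<in> Rcar s t" "w l = Tx s t h + sc \<alpha> (Xm d)"
    using homog_decomp[OF wR d] A(1) unfolding \<alpha>_def by auto
  obtain h' where h': "h' \<in> Rcar s t" "w l' = Tx s t h' + sc \<alpha>' (Xm d)"
    using homog_decomp[OF wR' d'] A(1) unfolding \<alpha>'_def by auto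
  define \<beta> where "\<beta> i = (if i = l then \<alpha>' else 0) + (if i = l' then - \<alpha> else 0)" for i
  have "(\<Sum>i<k. sc (\<beta> i) (w i)) = (\<Sum>i<k. sc (if i = l then \<alpha>' else 0) (w i) + sc (if i = l' then - \<alpha> else 0) (w i))"
    unfolding \<beta>_def by (simp only: sc_add2)
  also have "\<dots> = sc \<alpha>' (w l) + sc (- \<alpha>) (w l')"
    by (simp only: sum.distrib sum_delta_sc[OF l] sum_delta_sc[OF l'])
  also have "\<dots> = Tx s t (sc \<alpha>' h + sc (- \<alpha>) h')"
    unfolding h(2) h'(2) Tx_add Tx_sc by (simp add: sc_def fun_eq_iff algebra_simps)
  finally have X: "Tx s t (sc \<alpha>' h + sc (- \<alpha>) h') = (\<Sum>i<k. sc (\<beta> i) (w i))" by simp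
  have "sc \<alpha>' h + sc (- \<alpha>) h' \<in> Rcar s t" using h(1) h'(1) by (intro Rcar_add Rcar_sc)
  from this X have "\<beta> l = 0" by (rule PD_H[OF s P _ _ l])
  then show False using ne A' unfolding \<beta>_def \<alpha>'_def by simp
qed

lemma PD_bound:
  assumes s: "0 < s" and P: "PD s t w k V"
  shows "k \<le> s"
proof -
  define D where "D l = (SOME d. Rhomog d (w l))" for l
  have D: "Rhomog (D l) (w l)" if "l < k" for l
    unfolding D_def by (rule someI_ex) (use PD_gen[OF P that] in blast)
  have "inj_on D {..<k}"
  proof (rule inj_onI)
    fix l l' assume l1: "l \<in> {..<k}" and l2: "l' \<in> {..<k}" and eq: "D l = D l'"
    show "l = l'"
    proof (rule ccontr)
      assume ne: "l \<noteq> l'"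
      have "Rhomog (D l) (w l')" using D[of l'] l2 eq by simp
      then show False using deg_distinct[OF s P _ _ ne D[of l]] l1 l2 by simp
    qed
  qed
  moreover have "D ` {..<k} \<subseteq> {..<s}" using deg_ok[OF s P] D by auto
  ultimately have "card {..<k} \<le> card {..<s}" by (intro card_inj_on_le) auto
  then show ?thesis by simp
qed

lemma PD_full:
  fixes w :: "nat \<Rightarrow> 'a::field vec"
  assumes s: "0 < s"
  shows "PD s t w k V \<Longrightarrow> \<exists>(w' :: nat \<Rightarrow> 'a vec) k' V'. PD s t w' k' V' \<and> (\<forall>v\<in>V'. v = 0)"
proof (induction "s - k" arbitrary: w k V rule: less_induct)
  case less
  show ?case
  proof (cases "\<forall>v\<in>V. v = 0")
    case True then show ?thesis using less.prems by blast
  next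
    case False
    then obtain v0 where v0: "v0 \<in> V" "v0 \<noteq> 0" by blast
    obtain \<omega> W where P': "PD s t (w(k := \<omega>)) (Suc k) W" using PD_step[OF s less.prems v0] by blast
    have "Suc k \<le> s" by (rule PD_bound[OF s P'])
    then have "s - Suc k < s - k" by simp
    then show ?thesis using less.hyps[OF _ P'] by blast
  qed
qed

lemma phi_lc:
  assumes ds: "d < s" and st: "s \<le> t"
  shows "phi d (lc s t c w) = c 0 * phi d w"
proof -
  have e: "c j * phi d (Tp s t j w) = (if j = 0 then c 0 * phi d w else 0)" for j
  proof (cases j)
    case (Suc j')
    have "phi d (Tp s t j w) = 0" unfolding Suc funpow.simps comp_apply by (rule phi_Tx[OF ds st])
    then show ?thesis using Suc by simp
  qed simp
  have "phi d (lc s t c w) = (\<Sum>j<s+t. c j * phi d (Tp s t j w))"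
    unfolding lc_def by (simp add: phi_sum phi_sc)
  also have "\<dots> = (\<Sum>j<s+t. if j = 0 then c 0 * phi d w else 0)" by (rule sum.cong[OF refl e])
  also have "\<dots> = c 0 * phi d w" using ds by (simp only: sum.delta finite_lessThan lessThan_iff) simp
  finally show ?thesis .
qed

lemma PD_surj:
  assumes s: "0 < s" and st: "s \<le> t" and P: "PD s t w k V" and V0: "\<forall>v\<in>V. v = 0"
    and D: "\<And>l. l < k \<Longrightarrow> Rhomog (D l) (w l)" and d: "d < s"
  shows "\<exists>l<k. D l = d"
proof (rule ccontr)
  assume A: "\<not> (\<exists>l<k. D l = d)"
  have XR: "Xm d \<in> Rcar s t" unfolding Xm_Em using d st s by (intro Em_Rcar) auto
  obtain m v where m: "\<forall>i<k. m i \<in> cyc s t (w i)" and v: "v \<in> V" and r: "Xm d = (\<Sum>i<k. m i) + v"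
    using PD_ex[OF P XR] by blast
  have v0: "v = 0" using V0 v by blast
  have "phi d (Xm d :: 'a vec) = 1" unfolding Xm_Em phi_Em by simp
  moreover have "phi d (Xm d) = (\<Sum>i<k. phi d (m i)) + phi d v" unfolding r by (simp only: phi_add phi_sum)
  moreover have "phi d (m i) = 0" if i: "i < k" for i
  proof -
    obtain c where "m i = lc s t c (w i)" using m i unfolding cyc_def by blast
    then have "phi d (m i) = c 0 * phi d (w i)" using phi_lc[OF d st] by simp
    moreover have "phi d (w i) = 0" using phi_homog[OF D[OF i]] A i by blast
    ultimately show ?thesis by simp
  qed
  ultimately show False using v0 by (simp add: phi_zero)
qed

theorem theorem2p12:
  fixes s t :: nat
  assumes "alg_closed TYPE('a::field)"
    and "1 \<le> s" and "s \<le> t"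
  shows "\<exists>\<omega> :: nat \<Rightarrow> nat \<Rightarrow> nat \<Rightarrow> 'a.
           (\<forall>i<s. \<omega> i \<in> Rcar s t \<and> \<omega> i \<noteq> Rzero \<and> Rhomog i (\<omega> i)) \<and>
           (\<forall>r \<in> Rcar s t. \<exists>!m :: nat \<Rightarrow> nat \<Rightarrow> nat \<Rightarrow> 'a.
              (\<forall>i<s. m i \<in> Rcyclic s t (\<omega> i)) \<and> (\<forall>i. s \<le> i \<longrightarrow> m i = Rzero) \<and>
              r = (\<lambda>a b. \<Sum>i<s. m i a b))"
proof -
  have s: "0 < s" using assms(2) by simp
  have st: "s \<le> t" by (rule assms(3))
  obtain w :: "nat \<Rightarrow> 'a vec" and k V where P: "PD s t w k V" and V0: "\<forall>v\<in>V. v = 0"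
    using PD_full[OF s PD_init[where w="\<lambda>i. 0"]] by blast
  define D where "D l = (SOME d. Rhomog d (w l))" for l
  have D: "Rhomog (D l) (w l)" if "l < k" for l
    unfolding D_def by (rule someI_ex) (use PD_gen[OF P that] in blast)
  have inj: "inj_on D {..<k}"
  proof (rule inj_onI)
    fix l l' assume l1: "l \<in> {..<k}" and l2: "l' \<in> {..<k}" and eq: "D l = D l'"
    show "l = l'"
    proof (rule ccontr)
      assume ne: "l \<noteq> l'"
      have "Rhomog (D l) (w l')" using D[of l'] l2 eq by simp
      then show False using deg_distinct[OF s P _ _ ne D[of l]] l1 l2 by simp
    qed
  qed
  have img: "D ` {..<k} = {..<s}"
  proof
    show "D ` {..<k} \<subseteq> {..<s}" using deg_ok[OF s P] D by auto
    show "{..<s} \<subseteq> D ` {..<k}"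
    proof
      fix d assume "d \<in> {..<s}"
      then obtain l where "l < k" "D l = d" using PD_surj[OF s st P V0 D] by blast
      then show "d \<in> D ` {..<k}" by blast
    qed
  qed
  have "card (D ` {..<k}) = k" using card_image[OF inj] by simp
  then have ks: "k = s" using img by simp
  have bijD: "bij_betw D {..<s} {..<s}" unfolding bij_betw_def using inj img ks by simp
  define I where "I = inv_into {..<s} D"
  have bijI: "bij_betw I {..<s} {..<s}" unfolding I_def by (rule bij_betw_inv_into[OF bijD])
  have DI: "D (I d) = d" if "d < s" for d
    unfolding I_def using that img ks by (intro f_inv_into_f) auto
  have ID: "I (D l) = l" if "l < s" for l
    unfolding I_def using that inj ks by (intro inv_into_f_f) auto
  have Is: "I d < s" if "d < s" for d using bijI that by (auto simp: bij_betw_def)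
  define \<omega> where "\<omega> d = w (I d)" for d
  have Rz: "Rzero = (0 :: 'a vec)" by (simp add: Rzero_def fun_eq_iff)
  have gen: "\<omega> i \<in> Rcar s t \<and> \<omega> i \<noteq> Rzero \<and> Rhomog i (\<omega> i)" if i: "i < s" for i
  proof -
    have Ik: "I i < k" using Is[OF i] ks by simp
    have "w (I i) \<in> Rcar s t \<and> w (I i) \<noteq> 0" using PD_gen[OF P Ik] by blast
    moreover have "Rhomog i (w (I i))" using D[OF Ik] DI[OF i] by simp
    ultimately show ?thesis unfolding \<omega>_def Rz by blast
  qed
  have Rc: "Rcyclic s t (\<omega> i) = cyc s t (\<omega> i)" if "i < s" for i
    using Rcyclic_eq[OF s] gen[OF that] by blast
  have \<omega>D: "\<omega> (D l) = w l" if "l < s" for l unfolding \<omega>_def using ID[OF that] by simp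
  have Dl: "D l < s" if "l < s" for l using bijD that by (auto simp: bij_betw_def)
  have sumfun: "(\<lambda>a b. \<Sum>i<s. m i a b) = (\<Sum>i<s. m i)" for m :: "nat \<Rightarrow> 'a vec"
    by (intro ext) (simp only: fun_sum_apply)
  have part2: "\<exists>!m. (\<forall>i<s. m i \<in> Rcyclic s t (\<omega> i)) \<and> (\<forall>i. s \<le> i \<longrightarrow> m i = Rzero) \<and>
              r = (\<lambda>a b. \<Sum>i<s. m i a b)" if r: "r \<in> Rcar s t" for r :: "'a vec"
  proof -
    obtain mm v where mm: "\<forall>i<k. mm i \<in> cyc s t (w i)" and v: "v \<in> V" and rv: "r = (\<Sum>i<k. mm i) + v"
      using PD_ex[OF P r] by (elim exE conjE) (rule that; assumption)
    have v0: "v = 0" using V0 v by blast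
    have rmm: "r = (\<Sum>i<s. mm i)" using rv unfolding v0 ks by (simp only: add_0_right)
    define m0 where "m0 d = (if d < s then mm (I d) else 0)" for d
    have m0sum: "(\<Sum>i<s. m0 i) = r"
    proof -
      have "\<And>i. i \<in> {..<s} \<Longrightarrow> m0 i = mm (I i)" unfolding m0_def by simp
      then have "(\<Sum>i<s. m0 i) = (\<Sum>i<s. mm (I i))" by (rule sum.cong[OF refl])
      also have "\<dots> = (\<Sum>i<s. mm i)" by (rule sum.reindex_bij_betw[OF bijI])
      finally show ?thesis using rmm by simp
    qed
    have m0c: "m0 i \<in> cyc s t (\<omega> i)" if i: "i < s" for i
    proof -
      have "I i < k" using Is[OF i] ks by simp
      then have "mm (I i) \<in> cyc s t (w (I i))" using mm by blast
      then show ?thesis unfolding m0_def \<omega>_def using i by simp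
    qed
    show "\<exists>!m. (\<forall>i<s. m i \<in> Rcyclic s t (\<omega> i)) \<and> (\<forall>i. s \<le> i \<longrightarrow> m i = Rzero) \<and>
              r = (\<lambda>a b. \<Sum>i<s. m i a b)"
    proof (rule ex1I[of _ m0])
      show "(\<forall>i<s. m0 i \<in> Rcyclic s t (\<omega> i)) \<and> (\<forall>i. s \<le> i \<longrightarrow> m0 i = Rzero) \<and>
              r = (\<lambda>a b. \<Sum>i<s. m0 i a b)"
        using m0c Rc m0sum Rz unfolding sumfun by (auto simp: m0_def)
    next
      fix m assume Pm: "(\<forall>i<s. m i \<in> Rcyclic s t (\<omega> i)) \<and> (\<forall>i. s \<le> i \<longrightarrow> m i = Rzero) \<and>
              r = (\<lambda>a b. \<Sum>i<s. m i a b)"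
      have mc: "m i \<in> cyc s t (\<omega> i)" if "i < s" for i using Pm Rc that by blast
      have msum: "(\<Sum>i<s. m i) = r" using Pm unfolding sumfun by simp
      define \<mu> where "\<mu> l = m (D l) - m0 (D l)" for l
      have \<mu>c: "\<forall>l<k. \<mu> l \<in> cyc s t (w l)"
      proof (intro allI impI)
        fix l assume "l < k"
        then have l: "l < s" using ks by simp
        show "\<mu> l \<in> cyc s t (w l)" unfolding \<mu>_def
          using cyc_diff[OF mc[OF Dl[OF l]] m0c[OF Dl[OF l]]] \<omega>D[OF l] by simp
      qed
      have "(\<Sum>l<k. \<mu> l) = (\<Sum>l<s. m (D l)) - (\<Sum>l<s. m0 (D l))"
        unfolding \<mu>_def ks by (rule sum_subtractf)
      also have "\<dots> = (\<Sum>i<s. m i) - (\<Sum>i<s. m0 i)"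
        by (simp only: sum.reindex_bij_betw[OF bijD])
      also have "\<dots> = 0" using msum m0sum by simp
      finally have "(\<Sum>l<k. \<mu> l) + 0 = 0" by simp
      then have \<mu>0: "\<forall>l<k. \<mu> l = 0" using PD_un[OF P \<mu>c subsp_0[OF PD_sub[OF P]]] by blast
      show "m = m0"
      proof (rule ext)
        fix d
        show "m d = m0 d"
        proof (cases "d < s")
          case True
          then have "\<mu> (I d) = 0" using \<mu>0 Is ks by simp
          then show ?thesis unfolding \<mu>_def using DI[OF True] by simp
        next
          case False
          then show ?thesis using Pm Rz unfolding m0_def by simp
        qed
      qed
    qed
  qed
  show ?thesis
  proof (rule exI[of _ \<omega>], rule conjI)
    show "\<forall>i<s. \<omega> i \<in> Rcar s t \<and> \<omega> i \<noteq> Rzero \<and> Rhomog i (\<omega> i)" using gen by blast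
    show "\<forall>r \<in> Rcar s t. \<exists>!m :: nat \<Rightarrow> nat \<Rightarrow> nat \<Rightarrow> 'a.
              (\<forall>i<s. m i \<in> Rcyclic s t (\<omega> i)) \<and> (\<forall>i. s \<le> i \<longrightarrow> m i = Rzero) \<and>
              r = (\<lambda>a b. \<Sum>i<s. m i a b)" using part2 by blast
  qed
qed
end
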